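(* A convex hexagon is affine regular if and only if both of the following hold: - all six of its vertex triangles have the same area; - for one of the triangles whose vertices are vertices of the hexagon and which has exactly one side in common with the hexagon (for example the triangle $013$ in the hexagon $012345$), its area is twice the area of a vertex triangle.
   Context: An affine map of the plane is a bijection of the plane that maps collinear points to collinear points. A polygon is affine regular if it is the image of a regular polygon under an affine map, with vertices corresponding in order. For a hexagon with vertices $0,\dots,5$ in cyclic order, the vertex triangles are the triangles with vertices $i-1,i,i+1$ (indices mod $6$). *)

theory Defs
  imports "HOL-Analysis.Analysis"
begin

type_synonym point = "real \<times> real"

text \<open>A hexagon is given by its vertices P 0, ..., P 5 (in cyclic order);
  indices are always taken mod 6.\<close>
type_synonym hexagon = "nat \<Rightarrow> point"

definition cross3 :: "point \<Rightarrow> point \<Rightarrow> point \<Rightarrow> real" where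
  "cross3 a b c = (fst b - fst a) * (snd c - snd a) - (fst c - fst a) * (snd b - snd a)"

definition tri_area :: "point \<Rightarrow> point \<Rightarrow> point \<Rightarrow> real" where
  "tri_area a b c = \<bar>cross3 a b c\<bar> / 2"

definition convex_hexagon :: "hexagon \<Rightarrow> bool" where
  "convex_hexagon P \<longleftrightarrow>
     (\<forall>i<6. \<forall>j<6. j \<noteq> i \<and> j \<noteq> (i+1) mod 6 \<longrightarrow> cross3 (P i) (P ((i+1) mod 6)) (P j) > 0) \<or>
     (\<forall>i<6. \<forall>j<6. j \<noteq> i \<and> j \<noteq> (i+1) mod 6 \<longrightarrow> cross3 (P i) (P ((i+1) mod 6)) (P j) < 0)"

definition affine_map :: "(point \<Rightarrow> point) \<Rightarrow> bool" where
  "affine_map f \<longleftrightarrow> bij f \<and>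
     (\<forall>a b c. collinear {a, b, c} \<longrightarrow> collinear {f a, f b, f c})"

definition regular_hexagon :: "hexagon \<Rightarrow> bool" where
  "regular_hexagon Q \<longleftrightarrow> (\<exists>c r \<theta> s. r > 0 \<and> (s = 1 \<or> s = -1) \<and>
     (\<forall>k<6. Q k = (fst c + r * cos (\<theta> + s * real k * pi / 3),
                   snd c + r * sin (\<theta> + s * real k * pi / 3))))"

definition affine_regular :: "hexagon \<Rightarrow> bool" where
  "affine_regular P \<longleftrightarrow> (\<exists>f Q. affine_map f \<and> regular_hexagon Q \<and> (\<forall>k<6. P k = f (Q k)))"

definition vertex_tri_area :: "hexagon \<Rightarrow> nat \<Rightarrow> real" where
  "vertex_tri_area P i = tri_area (P ((i + 5) mod 6)) (P (i mod 6)) (P ((i + 1) mod 6))"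

end

theory Submission
  imports Defs
begin

definition xc :: "point \<Rightarrow> point \<Rightarrow> real" where
  "xc u v = fst u * snd v - snd u * fst v"

lemma xc_ident: "xc a b *\<^sub>R c + xc b c *\<^sub>R a + xc c a *\<^sub>R b = 0"
  by (simp add: xc_def prod_eq_iff algebra_simps)

lemma cross3_xc: "cross3 a b c = xc (b - a) (c - a)"
  by (simp add: cross3_def xc_def)

lemma line_param:
  assumes "A \<noteq> B" "cross3 A B Y = 0"
  shows "\<exists>t. Y = A + t *\<^sub>R (B - A)"
proof -
  obtain a1 a2 where A: "A = (a1, a2)" by (cases A)
  obtain b1 b2 where B: "B = (b1, b2)" by (cases B)
  obtain y1 y2 where Y: "Y = (y1, y2)" by (cases Y)
  have h: "(b1 - a1) * (y2 - a2) = (y1 - a1) * (b2 - a2)"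
    using assms(2) by (simp add: A B Y cross3_def)
  show ?thesis
  proof (cases "b1 \<noteq> a1")
    case True
    define t where "t = (y1 - a1) / (b1 - a1)"
    have 1: "y1 = a1 + t * (b1 - a1)" using True by (simp add: t_def)
    have e: "t * (b1 - a1) = y1 - a1" using True by (simp add: t_def)
    have "(y2 - a2) * (b1 - a1) = (y1 - a1) * (b2 - a2)" using h by (simp add: algebra_simps)
    also have "\<dots> = (t * (b2 - a2)) * (b1 - a1)" by (simp add: e[symmetric] algebra_simps)
    finally have "(y2 - a2) * (b1 - a1) = (t * (b2 - a2)) * (b1 - a1)" .
    then have 2: "y2 = a2 + t * (b2 - a2)" using True by simp
    show ?thesis using 1 2 by (intro exI[of _ t]) (simp add: A B Y)
  next
    case False
    then have F: "b1 = a1" by simp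
    then have T: "b2 \<noteq> a2" using assms(1) by (simp add: A B)
    define t where "t = (y2 - a2) / (b2 - a2)"
    have 2: "y2 = a2 + t * (b2 - a2)" using T by (simp add: t_def)
    have "y1 = a1" using h F T by simp
    then show ?thesis using 2 F by (intro exI[of _ t]) (simp add: A B Y)
  qed
qed

lemma coll_iff: "collinear {a, b, c :: point} \<longleftrightarrow> cross3 a b c = 0"
proof
  assume "collinear {a, b, c}"
  then obtain u where u: "\<forall>x\<in>{a,b,c}. \<forall>y\<in>{a,b,c}. \<exists>k. x - y = k *\<^sub>R u"
    unfolding collinear_def by blast
  then obtain k1 k2 where "b - a = k1 *\<^sub>R u" "c - a = k2 *\<^sub>R u" by blast
  then show "cross3 a b c = 0" by (simp add: cross3_xc xc_def algebra_simps)
next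
  assume h: "cross3 a b c = 0"
  show "collinear {a, b, c}"
  proof (cases "a = b")
    case True
    show ?thesis unfolding collinear_def
    proof (intro exI[of _ "c - a"] ballI)
      fix x y assume "x \<in> {a,b,c}" "y \<in> {a,b,c}"
      then show "\<exists>k. x - y = k *\<^sub>R (c - a)" using True
        by (auto intro: exI[of _ 0] exI[of _ 1] exI[of _ "-1"] simp: algebra_simps)
    qed
  next
    case False
    then obtain t where t: "c = a + t *\<^sub>R (b - a)" using line_param h by blast
    show ?thesis unfolding collinear_def
    proof (intro exI[of _ "b - a"] ballI)
      fix x y assume "x \<in> {a,b,c}" "y \<in> {a,b,c}"
      then have "(x = a \<or> x = b \<or> x = c) \<and> (y = a \<or> y = b \<or> y = c)" by auto
      then show "\<exists>k. x - y = k *\<^sub>R (b - a)" 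
      proof (cases "x = y")
        case True then show ?thesis by (intro exI[of _ 0]) simp
      next
        case False
        with \<open>(x = a \<or> x = b \<or> x = c) \<and> (y = a \<or> y = b \<or> y = c)\<close> show ?thesis
      proof (elim conjE disjE)
      qed (use t in \<open>auto intro: exI[of _ 0] exI[of _ 1] exI[of _ "-1"] exI[of _ t] exI[of _ "-t"]
         exI[of _ "t - 1"] exI[of _ "1 - t"] simp: algebra_simps\<close>)
    qed
    qed
  qed
qed

lemma xc_anti: "xc a b = - xc b a" by (simp add: xc_def)
lemma xc_self: "xc a a = 0" by (simp add: xc_def)
lemma xc_scale_l: "xc (k *\<^sub>R a) b = k * xc a b" by (simp add: xc_def algebra_simps)
lemma xc_scale_r: "xc a (k *\<^sub>R b) = k * xc a b" by (simp add: xc_def algebra_simps)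
lemma xc_add_l: "xc (a + c) b = xc a b + xc c b" by (simp add: xc_def algebra_simps)
lemma xc_add_r: "xc a (b + c) = xc a b + xc a c" by (simp add: xc_def algebra_simps)
lemma xc_diff_l: "xc (a - c) b = xc a b - xc c b" by (simp add: xc_def algebra_simps)
lemma xc_diff_r: "xc a (b - c) = xc a b - xc a c" by (simp add: xc_def algebra_simps)
lemma xc_sub_self: "xc u (w - u) = xc u w" by (simp add: xc_def algebra_simps)
lemmas xc_lin = xc_scale_l xc_scale_r xc_add_l xc_add_r xc_diff_l xc_diff_r xc_self

lemma cross3_rot: "cross3 a b c = cross3 b c a" by (simp add: cross3_def algebra_simps)
lemma cross3_swap: "cross3 a b c = - cross3 b a c" by (simp add: cross3_def algebra_simps)
lemma cross3_eq: "a = b \<Longrightarrow> cross3 a b c = 0" by (simp add: cross3_def)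
lemma cross3_eq2: "a = c \<Longrightarrow> cross3 a b c = 0" by (simp add: cross3_def)
lemma cross3_eq3: "b = c \<Longrightarrow> cross3 a b c = 0" by (simp add: cross3_def)

lemma vec_zero:
  assumes "xc u v \<noteq> 0" "xc u g = 0" "xc v g = 0"
  shows "g = 0"
proof -
  have "xc u v *\<^sub>R g + xc v g *\<^sub>R u + xc g u *\<^sub>R v = 0" by (rule xc_ident)
  moreover have "xc g u = 0" using assms(2) xc_anti[of g u] by simp
  ultimately have "xc u v *\<^sub>R g = 0" using assms(3) by simp
  then show ?thesis using assms(1) by simp
qed

lemma G1:
  assumes "A \<noteq> C" "cross3 A B C = 0" "cross3 A C Z = 0"
  shows "cross3 A B Z = 0"
proof -
  have "cross3 A C B = - cross3 A B C" by (simp add: cross3_def algebra_simps)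
  then have "cross3 A C B = 0" using assms(2) by simp
  then obtain t where t: "B = A + t *\<^sub>R (C - A)" using line_param assms(1) by blast
  obtain t' where t': "Z = A + t' *\<^sub>R (C - A)" using line_param assms(1,3) by blast
  have "B - A = t *\<^sub>R (C - A)" "Z - A = t' *\<^sub>R (C - A)" using t t' by simp_all
  then show ?thesis by (simp only: cross3_xc xc_scale_l xc_scale_r xc_self mult_zero_right)
qed

lemma G2:
  assumes "A \<noteq> B" "P \<noteq> Q" "cross3 A B P = 0" "cross3 A B Q = 0" "cross3 P Q X = 0"
  shows "cross3 A B X = 0"
proof -
  obtain s where s: "P = A + s *\<^sub>R (B - A)" using line_param assms(1,3) by blast
  obtain r where r: "Q = A + r *\<^sub>R (B - A)" using line_param assms(1,4) by blast
  have rs: "r - s \<noteq> 0" using assms(2) s r by auto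
  have e1: "Q - P = (r - s) *\<^sub>R (B - A)" unfolding s r by (simp add: algebra_simps)
  define d where "d = B - A"
  define Y where "Y = X - A"
  have e2: "X - P = Y - s *\<^sub>R d" unfolding s Y_def d_def by (simp add: algebra_simps)
  have "cross3 P Q X = xc (Q - P) (X - P)" by (rule cross3_xc)
  also have "\<dots> = xc ((r - s) *\<^sub>R d) (Y - s *\<^sub>R d)" using e1 e2 d_def by simp
  also have "\<dots> = (r - s) * xc d Y" by (simp add: xc_scale_l xc_diff_r xc_scale_r xc_self)
  also have "\<dots> = (r - s) * cross3 A B X" by (simp add: cross3_xc d_def Y_def)
  finally have "cross3 P Q X = (r - s) * cross3 A B X" .
  then show ?thesis using rs assms(5) by simp
qed

lemma par_of_disj:
  assumes "\<forall>y. \<not> (cross3 A B y = 0 \<and> cross3 C D y = 0)"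
  shows "xc (B - A) (D - C) = 0"
proof (rule ccontr)
  assume d: "xc (B - A) (D - C) \<noteq> 0"
  define t where "t = - xc (B - A) (C - A) / xc (B - A) (D - C)"
  define y where "y = C + t *\<^sub>R (D - C)"
  have "cross3 A B y = xc (B - A) (C - A) + t * xc (B - A) (D - C)"
    by (simp add: y_def cross3_xc xc_lin algebra_simps)
  also have "\<dots> = 0" using d by (simp add: t_def)
  finally have 1: "cross3 A B y = 0" .
  have 2: "cross3 C D y = 0" by (simp add: y_def cross3_xc xc_lin)
  show False using assms 1 2 by blast
qed

lemma aff_pres:
  assumes "affine_map f" "cross3 a b c = 0"
  shows "cross3 (f a) (f b) (f c) = 0"
proof -
  have "collinear {a, b, c}" using assms(2) coll_iff by blast
  then have "collinear {f a, f b, f c}" using assms(1) unfolding affine_map_def by blast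
  then show ?thesis using coll_iff by blast
qed

lemma aff_nondeg:
  assumes af: "affine_map f" and nd: "cross3 a b c \<noteq> 0"
  shows "cross3 (f a) (f b) (f c) \<noteq> 0"
proof
  assume H: "cross3 (f a) (f b) (f c) = 0"
  have inj: "inj f" and surj: "surj f" using af by (auto simp: affine_map_def bij_def)
  have ab: "a \<noteq> b"
  proof assume "a = b" then show False using nd by (simp add: cross3_def) qed
  have ac: "a \<noteq> c"
  proof assume "a = c" then show False using nd by (simp add: cross3_def) qed
  have fab: "f a \<noteq> f b" and fac: "f a \<noteq> f c" using ab ac inj by (auto dest: injD)
  have lineAB: "cross3 (f a) (f b) (f p) = 0" if "cross3 a b p = 0" for p
    using aff_pres[OF af that] .
  have lineAC: "cross3 (f a) (f b) (f q) = 0" if "cross3 a c q = 0" for q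
    using G1[OF fac H aff_pres[OF af that]] .
  have all: "cross3 (f a) (f b) (f x) = 0" for x
  proof -
    define D where "D = cross3 a b c"
    define s where "s = xc (x - a) (c - a) / D"
    define t where "t = xc (b - a) (x - a) / D"
    define p where "p = a + (2 * s) *\<^sub>R (b - a)"
    define q where "q = a + (2 * t) *\<^sub>R (c - a)"
    have DD: "D \<noteq> 0" using nd D_def by simp
    have id: "xc (b - a) (c - a) *\<^sub>R (x - a) + xc (c - a) (x - a) *\<^sub>R (b - a) + xc (x - a) (b - a) *\<^sub>R (c - a) = 0"
      by (rule xc_ident)
    have "D *\<^sub>R (x - a) = xc (x - a) (c - a) *\<^sub>R (b - a) + xc (b - a) (x - a) *\<^sub>R (c - a)"
      using id by (simp add: D_def cross3_xc xc_anti[of "c - a"] xc_anti[of "x - a" "b - a"] algebra_simps)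
    then have "(1/D) *\<^sub>R (D *\<^sub>R (x - a)) = (1/D) *\<^sub>R (xc (x - a) (c - a) *\<^sub>R (b - a) + xc (b - a) (x - a) *\<^sub>R (c - a))"
      by simp
    then have "x - a = s *\<^sub>R (b - a) + t *\<^sub>R (c - a)"
      using DD by (simp add: s_def t_def scaleR_add_right)
    then have "a + (x - a) = a + (s *\<^sub>R (b - a) + t *\<^sub>R (c - a))" by simp
    then have xa: "x = a + (s *\<^sub>R (b - a) + t *\<^sub>R (c - a))" by simp
    have xe: "2 *\<^sub>R x = p + q"
      unfolding p_def q_def by (subst xa) (simp add: algebra_simps scaleR_2)
    have p1: "cross3 (f a) (f b) (f p) = 0"
      by (rule lineAB) (simp add: p_def cross3_xc xc_lin)
    have q1: "cross3 (f a) (f b) (f q) = 0"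
      by (rule lineAC) (simp add: q_def cross3_xc xc_lin)
    show ?thesis
    proof (cases "p = q")
      case True
      then have "2 *\<^sub>R x = p + p" using xe by simp
      also have "p + p = 2 *\<^sub>R p" by (rule scaleR_2[symmetric])
      finally have "2 *\<^sub>R x = 2 *\<^sub>R p" .
      then have "x = p" by simp
      then show ?thesis using p1 by simp
    next
      case False
      then have fpq: "f p \<noteq> f q" using inj by (auto dest: injD)
      have "2 *\<^sub>R (x - p) = q - p" using xe by (simp add: algebra_simps scaleR_2)
      have "2 * cross3 p q x = xc (q - p) (2 *\<^sub>R (x - p))" by (simp add: cross3_xc xc_scale_r)
      then have "2 * cross3 p q x = xc (q - p) (q - p)" by (simp only: \<open>2 *\<^sub>R (x - p) = q - p\<close>)
      then have "cross3 p q x = 0" by (simp add: xc_self)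
      then have "cross3 (f p) (f q) (f x) = 0" by (rule aff_pres[OF af])
      then show ?thesis using G2[OF fab fpq p1 q1] by simp
    qed
  qed
  define d where "d = f b - f a"
  define y where "y = f a + (- snd d, fst d)"
  have "cross3 (f a) (f b) y = (fst d)^2 + (snd d)^2"
    by (simp add: y_def d_def cross3_def power2_eq_square algebra_simps)
  moreover have "d \<noteq> 0" using fab d_def by simp
  then have "(fst d)^2 + (snd d)^2 \<noteq> 0" by (simp add: prod_eq_iff)
  moreover obtain x where "y = f x" using surjD[OF surj] by blast
  ultimately show False using all by simp
qed

lemma aff_par:
  assumes af: "affine_map f" and nd: "cross3 a b c \<noteq> 0"
  shows "f (b + c - a) = f b + f c - f a"
proof -
  define d where "d = b + c - a"
  have surj: "surj f" using af by (auto simp: affine_map_def bij_def)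
  have bk: "cross3 u v w = 0" if "cross3 (f u) (f v) (f w) = 0" for u v w
    using aff_nondeg[OF af] that by blast
  have P1: "xc (f b - f a) (f d - f c) = 0"
  proof (rule par_of_disj, intro allI notI)
    fix y assume h: "cross3 (f a) (f b) y = 0 \<and> cross3 (f c) (f d) y = 0"
    obtain x where x: "y = f x" using surjD[OF surj] by blast
    have "cross3 a b x = 0" "cross3 c d x = 0" using h bk x by auto
    moreover have "cross3 c d x = cross3 a b x - cross3 a b c"
      by (simp add: d_def cross3_def algebra_simps)
    ultimately show False using nd by simp
  qed
  have P2: "xc (f c - f a) (f d - f b) = 0"
  proof (rule par_of_disj, intro allI notI)
    fix y assume h: "cross3 (f a) (f c) y = 0 \<and> cross3 (f b) (f d) y = 0"
    obtain x where x: "y = f x" using surjD[OF surj] by blast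
    have "cross3 a c x = 0" "cross3 b d x = 0" using h bk x by auto
    moreover have "cross3 b d x = cross3 a c x + cross3 a b c"
      by (simp add: d_def cross3_def algebra_simps)
    ultimately show False using nd by simp
  qed
  have N: "xc (f b - f a) (f c - f a) \<noteq> 0"
    using aff_nondeg[OF af nd] by (simp add: cross3_xc)
  have "f d - f b - f c + f a = 0"
  proof (rule vec_zero[OF N])
    show "xc (f b - f a) (f d - f b - f c + f a) = 0"
    proof -
      have g: "f d - f b - f c + f a = (f d - f c) - (f b - f a)" by (simp add: algebra_simps)
      show ?thesis by (simp only: g xc_sub_self P1)
    qed
    show "xc (f c - f a) (f d - f b - f c + f a) = 0"
    proof -
      have g: "f d - f b - f c + f a = (f d - f b) - (f c - f a)" by (simp add: algebra_simps)
      show ?thesis by (simp only: g xc_sub_self P2)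
    qed
  qed
  then show ?thesis by (simp add: d_def algebra_simps)
qed


lemma cos_sdelta: assumes "s = 1 \<or> s = (-1::real)" shows "cos (s * pi / 3) = 1/2"
  using assms cos_60 by (auto simp: cos_minus)

lemma sin_sdelta: assumes "s = 1 \<or> s = (-1::real)" shows "sin (s * pi / 3) = s * (sqrt 3 / 2)"
  using assms sin_60 by (auto simp: sin_minus)

lemma trig_rel:
  assumes "s = 1 \<or> s = (-1::real)"
  shows "cos (\<theta> + s * x * pi / 3) + cos (\<theta> + s * (x + 2) * pi / 3) = cos (\<theta> + s * (x + 1) * pi / 3)"
    and "sin (\<theta> + s * x * pi / 3) + sin (\<theta> + s * (x + 2) * pi / 3) = sin (\<theta> + s * (x + 1) * pi / 3)"
proof -
  define \<psi> where "\<psi> = \<theta> + s * (x + 1) * pi / 3"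
  define \<delta> where "\<delta> = s * pi / 3"
  have e1: "\<theta> + s * x * pi / 3 = \<psi> - \<delta>" by (simp add: \<psi>_def \<delta>_def algebra_simps)
  have e2: "\<theta> + s * (x + 2) * pi / 3 = \<psi> + \<delta>" by (simp add: \<psi>_def \<delta>_def algebra_simps)
  have c: "cos \<delta> = 1/2" using cos_sdelta[OF assms] by (simp add: \<delta>_def)
  show "cos (\<theta> + s * x * pi / 3) + cos (\<theta> + s * (x + 2) * pi / 3) = cos (\<theta> + s * (x + 1) * pi / 3)"
    unfolding e1 e2 \<psi>_def[symmetric] by (simp add: cos_add cos_diff c)
  show "sin (\<theta> + s * x * pi / 3) + sin (\<theta> + s * (x + 2) * pi / 3) = sin (\<theta> + s * (x + 1) * pi / 3)"
    unfolding e1 e2 \<psi>_def[symmetric] by (simp add: sin_add sin_diff c)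
qed

lemma trig_nd:
  assumes "s = 1 \<or> s = (-1::real)"
  shows "cos (\<theta> + s * x * pi / 3) * sin (\<theta> + s * (x + 2) * pi / 3)
       - sin (\<theta> + s * x * pi / 3) * cos (\<theta> + s * (x + 2) * pi / 3) \<noteq> 0"
proof -
  define \<alpha> where "\<alpha> = \<theta> + s * x * pi / 3"
  define \<delta> where "\<delta> = s * pi / 3"
  have e2: "\<theta> + s * (x + 2) * pi / 3 = \<alpha> + 2 * \<delta>" by (simp add: \<alpha>_def \<delta>_def algebra_simps)
  have c: "cos \<delta> = 1/2" using cos_sdelta[OF assms] by (simp add: \<delta>_def)
  have sd: "sin \<delta> = s * (sqrt 3 / 2)" using sin_sdelta[OF assms] by (simp add: \<delta>_def)
  have "cos \<alpha> * sin (\<alpha> + 2 * \<delta>) - sin \<alpha> * cos (\<alpha> + 2 * \<delta>) = sin (2 * \<delta>)"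
  proof -
    have "sin (2 * \<delta>) = sin ((\<alpha> + 2 * \<delta>) - \<alpha>)" by simp
    also have "\<dots> = sin (\<alpha> + 2 * \<delta>) * cos \<alpha> - cos (\<alpha> + 2 * \<delta>) * sin \<alpha>" by (rule sin_diff)
    finally show ?thesis by (simp add: algebra_simps)
  qed
  also have "\<dots> = sin \<delta>" by (simp add: sin_double c)
  finally show ?thesis using sd assms unfolding \<alpha>_def[symmetric] e2 by auto
qed

lemma vt_idx:
  "vertex_tri_area P 0 = tri_area (P 5) (P 0) (P 1)"
  "vertex_tri_area P 1 = tri_area (P 0) (P 1) (P 2)"
  "vertex_tri_area P 2 = tri_area (P 1) (P 2) (P 3)"
  "vertex_tri_area P 3 = tri_area (P 2) (P 3) (P 4)"
  "vertex_tri_area P 4 = tri_area (P 3) (P 4) (P 5)"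
  "vertex_tri_area P 5 = tri_area (P 4) (P 5) (P 0)"
proof -
  have i: "(0 + 5) mod 6 = (5::nat)" "0 mod 6 = (0::nat)" "(0 + 1) mod 6 = (1::nat)"
    "(1 + 5) mod 6 = (0::nat)" "1 mod 6 = (1::nat)" "(1 + 1) mod 6 = (2::nat)"
    "(2 + 5) mod 6 = (1::nat)" "2 mod 6 = (2::nat)" "(2 + 1) mod 6 = (3::nat)"
    "(3 + 5) mod 6 = (2::nat)" "3 mod 6 = (3::nat)" "(3 + 1) mod 6 = (4::nat)"
    "(4 + 5) mod 6 = (3::nat)" "4 mod 6 = (4::nat)" "(4 + 1) mod 6 = (5::nat)"
    "(5 + 5) mod 6 = (4::nat)" "5 mod 6 = (5::nat)" "(5 + 1) mod 6 = (0::nat)"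
    by simp_all
  show "vertex_tri_area P 0 = tri_area (P 5) (P 0) (P 1)"
  "vertex_tri_area P 1 = tri_area (P 0) (P 1) (P 2)"
  "vertex_tri_area P 2 = tri_area (P 1) (P 2) (P 3)"
  "vertex_tri_area P 3 = tri_area (P 2) (P 3) (P 4)"
  "vertex_tri_area P 4 = tri_area (P 3) (P 4) (P 5)"
  "vertex_tri_area P 5 = tri_area (P 4) (P 5) (P 0)"
    unfolding vertex_tri_area_def by (simp_all only: i)
qed

lemma dir1:
  assumes "affine_regular P"
  shows "(\<forall>i<6. vertex_tri_area P i = vertex_tri_area P 0) \<and>
            (\<exists>i<6. \<exists>j\<in>{(i + 3) mod 6, (i + 4) mod 6}.
               tri_area (P i) (P ((i + 1) mod 6)) (P j) = 2 * vertex_tri_area P 0)"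
proof -
  obtain f Q where af: "affine_map f" and reg: "regular_hexagon Q" and PQ: "\<forall>k<6. P k = f (Q k)"
    using assms unfolding affine_regular_def by blast
  obtain c r \<theta> s where r: "r > 0" and s: "s = 1 \<or> s = -1" and
    Qk: "\<forall>k<6. Q k = (fst c + r * cos (\<theta> + s * real k * pi / 3),
                   snd c + r * sin (\<theta> + s * real k * pi / 3))"
    using reg unfolding regular_hexagon_def by blast
  define Oc where "Oc = f c"
  have step: "P (k + 1) = P k + P (k + 2) - Oc" if k: "k < 4" for k
  proof -
    define x where "x = real k"
    have q0: "Q k = (fst c + r * cos (\<theta> + s * x * pi / 3), snd c + r * sin (\<theta> + s * x * pi / 3))"
      using Qk k by (simp add: x_def)
    have q1: "Q (k + 1) = (fst c + r * cos (\<theta> + s * (x + 1) * pi / 3), snd c + r * sin (\<theta> + s * (x + 1) * pi / 3))"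
    proof -
      have "k + 1 < 6" using k by simp
      moreover have r1: "real (k + 1) = x + 1" by (simp add: x_def)
      ultimately show ?thesis using Qk[rule_format, of "k + 1"] by (simp only: r1)
    qed
    have q2: "Q (k + 2) = (fst c + r * cos (\<theta> + s * (x + 2) * pi / 3), snd c + r * sin (\<theta> + s * (x + 2) * pi / 3))"
    proof -
      have "k + 2 < 6" using k by simp
      moreover have r1: "real (k + 2) = x + 2" by (simp add: x_def)
      ultimately show ?thesis using Qk[rule_format, of "k + 2"] by (simp only: r1)
    qed
    have rel: "Q (k + 1) = Q k + Q (k + 2) - c"
      unfolding q0 q1 q2 using trig_rel[OF s, of \<theta> x]
      by (simp add: prod_eq_iff algebra_simps) (metis distrib_left)
    have nd: "cross3 c (Q k) (Q (k + 2)) \<noteq> 0"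
    proof -
      have "cross3 c (Q k) (Q (k + 2)) = r * r * (cos (\<theta> + s * x * pi / 3) * sin (\<theta> + s * (x + 2) * pi / 3)
       - sin (\<theta> + s * x * pi / 3) * cos (\<theta> + s * (x + 2) * pi / 3))"
        unfolding q0 q2 by (simp add: cross3_def algebra_simps)
      then show ?thesis using trig_nd[OF s, of \<theta> x] r by simp
    qed
    have "f (Q (k + 1)) = f (Q k) + f (Q (k + 2)) - f c"
      using aff_par[OF af nd] rel by simp
    then show ?thesis using PQ k by (simp add: Oc_def)
  qed
  define u where "u = P 0 - Oc"
  define v where "v = P 1 - Oc"
  have s0: "P 1 = P 0 + P 2 - Oc" using step[of 0] by (simp add: eval_nat_numeral)
  have s1: "P 2 = P 1 + P 3 - Oc" using step[of 1] by (simp add: eval_nat_numeral)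
  have s2: "P 3 = P 2 + P 4 - Oc" using step[of 2] by (simp add: eval_nat_numeral)
  have s3: "P 4 = P 3 + P 5 - Oc" using step[of 3] by (simp add: eval_nat_numeral)
  have p0: "P 0 = Oc + u" by (simp add: u_def)
  have p1: "P 1 = Oc + v" by (simp add: v_def)
  have p2: "P 2 = Oc + v - u" using s0 by (simp add: u_def v_def algebra_simps)
  have p3: "P 3 = Oc - u" using s1 p2 by (simp add: v_def algebra_simps)
  have p4: "P 4 = Oc - v" using s2 p2 p3 by (simp add: algebra_simps)
  have p5: "P 5 = Oc + u - v" using s3 p3 p4 by (simp add: algebra_simps)
  have VV: "vertex_tri_area P 0 = \<bar>xc u v\<bar> / 2" "vertex_tri_area P 1 = \<bar>xc u v\<bar> / 2"
    "vertex_tri_area P 2 = \<bar>xc u v\<bar> / 2" "vertex_tri_area P 3 = \<bar>xc u v\<bar> / 2"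
    "vertex_tri_area P 4 = \<bar>xc u v\<bar> / 2" "vertex_tri_area P 5 = \<bar>xc u v\<bar> / 2"
    unfolding vt_idx tri_area_def p0 p1 p2 p3 p4 p5 by (simp_all add: cross3_def xc_def algebra_simps)
  have V: "vertex_tri_area P i = \<bar>xc u v\<bar> / 2" if "i < 6" for i
  proof -
    have "i = 0 \<or> i = 1 \<or> i = 2 \<or> i = 3 \<or> i = 4 \<or> i = 5" using that by auto
    then show ?thesis using VV by auto
  qed
  have T: "tri_area (P 0) (P 1) (P 3) = 2 * vertex_tri_area P 0"
  proof -
    have "cross3 (P 0) (P 1) (P 3) = 2 * xc u v"
      unfolding p0 p1 p3 by (simp add: cross3_def xc_def algebra_simps)
    then show ?thesis using V[of 0] by (simp add: tri_area_def abs_mult)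
  qed
  show ?thesis
  proof
    show "\<forall>i<6. vertex_tri_area P i = vertex_tri_area P 0" using V V[of 0] by (metis zero_less_numeral)
    show "\<exists>i<6. \<exists>j\<in>{(i + 3) mod 6, (i + 4) mod 6}.
               tri_area (P i) (P ((i + 1) mod 6)) (P j) = 2 * vertex_tri_area P 0"
    proof (intro exI[of _ 0] conjI bexI[of _ 3])
      show "(0::nat) < 6" by simp
      have i01: "(0 + 1) mod 6 = (1::nat)" by simp
      show "tri_area (P 0) (P ((0 + 1) mod 6)) (P 3) = 2 * vertex_tri_area P 0"
        using T by (simp only: i01)
      show "(3::nat) \<in> {(0 + 3) mod 6, (0 + 4) mod 6}" by simp
    qed
  qed
qed

lemma rec_step:
  assumes "xc a b = K" "xc b c = K" "K \<noteq> 0"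
  shows "c = (xc a c / K) *\<^sub>R b - a"
proof -
  have "xc a b *\<^sub>R c + xc b c *\<^sub>R a + xc c a *\<^sub>R b = 0" by (rule xc_ident)
  then have "K *\<^sub>R c = - (K *\<^sub>R a) + xc a c *\<^sub>R b"
    using assms(1,2) xc_anti[of c a] by (simp add: algebra_simps)
  then have "(1/K) *\<^sub>R (K *\<^sub>R c) = (1/K) *\<^sub>R (- (K *\<^sub>R a) + xc a c *\<^sub>R b)" by simp
  then show ?thesis using assms(3) by (simp add: scaleR_add_right algebra_simps)
qed

lemma core:
  fixes e0 e1 e2 e3 e4 e5 :: point
  assumes sum: "e0 + e1 + e2 + e3 + e4 + e5 = 0" and K: "K \<noteq> 0"
    and V: "xc e5 e0 = K" "xc e0 e1 = K" "xc e1 e2 = K" "xc e2 e3 = K" "xc e3 e4 = K" "xc e4 e5 = K"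
    and N: "K + xc e4 e0 \<noteq> 0"
  shows "xc e5 e1 * xc e0 e2 = K\<^sup>2"
proof -
  define l0 where "l0 = xc e5 e1 / K"
  define l1 where "l1 = xc e0 e2 / K"
  define l2 where "l2 = xc e1 e3 / K"
  define l5 where "l5 = xc e4 e0 / K"
  have r1: "e2 = l1 *\<^sub>R e1 - e0" unfolding l1_def by (rule rec_step[OF V(2) V(3) K])
  have r2: "e3 = l2 *\<^sub>R e2 - e1" unfolding l2_def by (rule rec_step[OF V(3) V(4) K])
  have r5: "e0 = l5 *\<^sub>R e5 - e4" unfolding l5_def by (rule rec_step[OF V(6) V(1) K])
  have r0: "e1 = l0 *\<^sub>R e0 - e5" unfolding l0_def by (rule rec_step[OF V(1) V(2) K])
  have e5: "e5 = l0 *\<^sub>R e0 - e1" using r0 by (simp add: algebra_simps)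
  have e3: "e3 = (l2 * l1 - 1) *\<^sub>R e1 - l2 *\<^sub>R e0" using r2 r1 by (simp add: algebra_simps)
  have e4: "e4 = (l5 * l0 - 1) *\<^sub>R e0 - l5 *\<^sub>R e1" using r5 e5 by (simp add: algebra_simps)
  define c0 where "c0 = l5 * l0 + l0 - l2 - 1"
  define c1 where "c1 = l1 * l2 + l1 - l5 - 1"
  have "e0 + e1 + e2 + e3 + e4 + e5 = c0 *\<^sub>R e0 + c1 *\<^sub>R e1"
    unfolding e3 e4 e5 r1 c0_def c1_def by (simp add: algebra_simps)
  then have z: "c0 *\<^sub>R e0 + c1 *\<^sub>R e1 = 0" using sum by simp
  have "c0 * K = xc (c0 *\<^sub>R e0 + c1 *\<^sub>R e1) e1" using V(2) by (simp add: xc_lin)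
  then have "c0 * K = 0" using z by (simp add: xc_def)
  then have c0: "c0 = 0" using K by simp
  have "c1 * K = xc e0 (c0 *\<^sub>R e0 + c1 *\<^sub>R e1)" using V(2) by (simp add: xc_lin)
  then have "c1 * K = 0" using z by (simp add: xc_def)
  then have c1: "c1 = 0" using K by simp
  have n5: "1 + l5 \<noteq> 0" using N K by (simp add: l5_def field_simps)
  have a: "l0 * (1 + l5) = 1 + l2" using c0 by (simp add: c0_def algebra_simps)
  have b: "l1 * (1 + l2) = 1 + l5" using c1 by (simp add: c1_def algebra_simps)
  have "l0 * l1 * (1 + l5) = 1 * (1 + l5)" using a b by (metis mult.commute mult.left_commute mult_1)
  then have "l0 * l1 = 1" using n5 by simp
  then show ?thesis using K by (simp add: l0_def l1_def field_simps power2_eq_square)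
qed

lemma lin_cross:
  "cross3 (q0 + fst a *\<^sub>R u + snd a *\<^sub>R w) (q0 + fst b *\<^sub>R u + snd b *\<^sub>R w) (q0 + fst c *\<^sub>R u + snd c *\<^sub>R w)
    = xc u w * cross3 a b c"
  by (simp add: cross3_def xc_def algebra_simps)

lemma lin_bij:
  assumes D: "xc u w \<noteq> 0"
  shows "bij (\<lambda>x::point. q0 + fst x *\<^sub>R u + snd x *\<^sub>R w)"
proof (rule o_bij)
  define g where "g = (\<lambda>y::point. (xc (y - q0) w / xc u w, xc u (y - q0) / xc u w))"
  show "g \<circ> (\<lambda>x. q0 + fst x *\<^sub>R u + snd x *\<^sub>R w) = id"
  proof
    fix x :: point
    have "xc (fst x *\<^sub>R u + snd x *\<^sub>R w) w = fst x * xc u w" by (simp add: xc_lin)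
    moreover have "xc u (fst x *\<^sub>R u + snd x *\<^sub>R w) = snd x * xc u w" by (simp add: xc_lin)
    ultimately show "(g \<circ> (\<lambda>x. q0 + fst x *\<^sub>R u + snd x *\<^sub>R w)) x = id x"
      using D by (simp add: g_def add.assoc prod_eq_iff)
  qed
  show "(\<lambda>x. q0 + fst x *\<^sub>R u + snd x *\<^sub>R w) \<circ> g = id"
  proof
    fix y :: point
    define z where "z = y - q0"
    have "xc u w *\<^sub>R z + xc w z *\<^sub>R u + xc z u *\<^sub>R w = 0" by (rule xc_ident)
    then have "xc u w *\<^sub>R z = xc z w *\<^sub>R u + xc u z *\<^sub>R w"
      using xc_anti[of w z] xc_anti[of z u] by (simp add: algebra_simps)
    then have "(1 / xc u w) *\<^sub>R (xc u w *\<^sub>R z) = (1 / xc u w) *\<^sub>R (xc z w *\<^sub>R u + xc u z *\<^sub>R w)" by simp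
    then have "z = (xc z w / xc u w) *\<^sub>R u + (xc u z / xc u w) *\<^sub>R w"
      using D by (simp add: scaleR_add_right)
    then show "((\<lambda>x. q0 + fst x *\<^sub>R u + snd x *\<^sub>R w) \<circ> g) y = id y"
      by (simp add: g_def z_def[symmetric]) (metis add.assoc diff_add_cancel z_def add.commute)
  qed
qed

lemma lin_affine:
  assumes D: "xc u w \<noteq> 0"
  shows "affine_map (\<lambda>x::point. q0 + fst x *\<^sub>R u + snd x *\<^sub>R w)"
  unfolding affine_map_def
proof (intro conjI allI impI)
  show "bij (\<lambda>x::point. q0 + fst x *\<^sub>R u + snd x *\<^sub>R w)" by (rule lin_bij[OF D])
  fix a b c :: point
  assume "collinear {a, b, c}"
  then have "cross3 a b c = 0" by (simp add: coll_iff)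
  then have "cross3 (q0 + fst a *\<^sub>R u + snd a *\<^sub>R w) (q0 + fst b *\<^sub>R u + snd b *\<^sub>R w) (q0 + fst c *\<^sub>R u + snd c *\<^sub>R w) = 0"
    by (simp add: lin_cross)
  then show "collinear {q0 + fst a *\<^sub>R u + snd a *\<^sub>R w, q0 + fst b *\<^sub>R u + snd b *\<^sub>R w, q0 + fst c *\<^sub>R u + snd c *\<^sub>R w}"
    by (simp add: coll_iff)
qed

lemma Qtab:
  "(cos (real 0 * pi / 3), sin (real 0 * pi / 3)) = (1, 0)"
  "(cos (real 1 * pi / 3), sin (real 1 * pi / 3)) = (1/2, sqrt 3 / 2)"
  "(cos (real 2 * pi / 3), sin (real 2 * pi / 3)) = (-1/2, sqrt 3 / 2)"
  "(cos (real 3 * pi / 3), sin (real 3 * pi / 3)) = (-1, 0)"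
  "(cos (real 4 * pi / 3), sin (real 4 * pi / 3)) = (-1/2, - sqrt 3 / 2)"
  "(cos (real 5 * pi / 3), sin (real 5 * pi / 3)) = (1/2, - sqrt 3 / 2)"
proof -
  show "(cos (real 0 * pi / 3), sin (real 0 * pi / 3)) = (1, 0)" by simp
  show "(cos (real 1 * pi / 3), sin (real 1 * pi / 3)) = (1/2, sqrt 3 / 2)" by (simp add: cos_60 sin_60)
  have a2: "real 2 * pi / 3 = pi - pi / 3" by simp
  show "(cos (real 2 * pi / 3), sin (real 2 * pi / 3)) = (-1/2, sqrt 3 / 2)"
  proof -
    have e: "2 * pi / 3 = pi * 2 / 3" by simp
    have "sin (2 * pi / 3) = sqrt 3 / 2" unfolding e by (rule sin_120')
    then show ?thesis by (simp add: cos_120)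
  qed
  have a3: "real 3 * pi / 3 = pi" by simp
  show "(cos (real 3 * pi / 3), sin (real 3 * pi / 3)) = (-1, 0)" unfolding a3 by simp
  have a4: "real 4 * pi / 3 = pi / 3 + pi" by simp
  show "(cos (real 4 * pi / 3), sin (real 4 * pi / 3)) = (-1/2, - sqrt 3 / 2)"
  proof -
    have e: "4 * pi / 3 = pi / 3 + pi" by simp
    have "cos (4 * pi / 3) = cos (pi / 3 + pi)" using e by simp
    also have "\<dots> = - cos (pi / 3)" by (rule cos_periodic_pi)
    finally have c: "cos (4 * pi / 3) = - 1 / 2" by (simp add: cos_60)
    have "sin (4 * pi / 3) = sin (pi / 3 + pi)" using e by simp
    also have "\<dots> = - sin (pi / 3)" by (rule sin_periodic_pi)
    finally have "sin (4 * pi / 3) = - sqrt 3 / 2" by (simp add: sin_60)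
    note c this
    then show ?thesis by simp
  qed
  have a5: "real 5 * pi / 3 = 2 * pi - pi / 3" by simp
  show "(cos (real 5 * pi / 3), sin (real 5 * pi / 3)) = (1/2, - sqrt 3 / 2)"
  proof -
    have e: "5 * pi / 3 = 2 * pi - pi / 3" by simp
    have "cos (5 * pi / 3) = cos (2 * pi - pi / 3)" using e by simp
    also have "\<dots> = cos (pi / 3)" by (rule cos_2pi_minus)
    finally have c: "cos (5 * pi / 3) = 1 / 2" by (simp add: cos_60)
    have "sin (5 * pi / 3) = sin (2 * pi - pi / 3)" using e by simp
    also have "\<dots> = - sin (pi / 3)" by (rule sin_2pi_minus)
    finally have "sin (5 * pi / 3) = - sqrt 3 / 2" by (simp add: sin_60)
    note c this
    then show ?thesis by simp
  qed
qed

lemma cross3_xc2: "cross3 a b c = xc (b - a) (c - b)"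
  by (simp add: cross3_def xc_def algebra_simps)
lemma id_a: "cross3 a b d = cross3 a b c + xc (b - a) (d - c)"
  by (simp add: cross3_def xc_def algebra_simps)
lemma id_b: "cross3 c d a = xc (b - a) (d - c) + cross3 b c d"
  by (simp add: cross3_def xc_def algebra_simps)
lemma sgn_eq: "x * K > 0 \<Longrightarrow> \<bar>x\<bar> = \<bar>K\<bar> \<Longrightarrow> x = (K::real)"
  by (cases "x \<ge> 0"; cases "K \<ge> 0") (auto simp: zero_less_mult_iff)
lemma sgn_eq2: "x * K > 0 \<Longrightarrow> \<bar>x\<bar> / 2 = 2 * (\<bar>K\<bar> / 2) \<Longrightarrow> x = 2 * (K::real)"
  by (cases "x \<ge> 0"; cases "K \<ge> 0") (auto simp: zero_less_mult_iff)

lemma chain6: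
  fixes K :: real
  assumes K: "K \<noteq> 0"
    and p: "L0 * L1 = K\<^sup>2" "L1 * L2 = K\<^sup>2" "L2 * L3 = K\<^sup>2" "L3 * L4 = K\<^sup>2" "L4 * L5 = K\<^sup>2" "L5 * L0 = K\<^sup>2"
    and d: "L0 = K \<or> L1 = K \<or> L2 = K \<or> L3 = K \<or> L4 = K \<or> L5 = K"
  shows "L1 = K \<and> L2 = K \<and> L3 = K"
proof -
  have hf: "y = K" if "x * y = K\<^sup>2" "x = K" for x y using that K by (simp add: power2_eq_square)
  have hb: "x = K" if "x * y = K\<^sup>2" "y = K" for x y using that K by (simp add: power2_eq_square)
  from d show ?thesis
  proof (elim disjE)
    assume "L0 = K" then show ?thesis using hf p by metis
  next
    assume "L1 = K" then show ?thesis using hf p by metis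
  next
    assume "L2 = K" then show ?thesis using hf hb p by metis
  next
    assume "L3 = K" then show ?thesis using hb p by metis
  next
    assume "L4 = K" then show ?thesis using hb p by metis
  next
    assume "L5 = K" then show ?thesis using hf p by metis
  qed
qed

lemma dir2:
  assumes cv: "convex_hexagon P"
    and eqv: "\<forall>i<6. vertex_tri_area P i = vertex_tri_area P 0"
    and ex: "\<exists>i<6. \<exists>j\<in>{(i + 3) mod 6, (i + 4) mod 6}.
               tri_area (P i) (P ((i + 1) mod 6)) (P j) = 2 * vertex_tri_area P 0"
  shows "affine_regular P"
proof -
  define K where "K = cross3 (P 5) (P 0) (P 1)"
  have sg: "cross3 (P i) (P ((i + 1) mod 6)) (P j) * K > 0"
    if ij: "i < 6" "j < 6" "j \<noteq> i" "j \<noteq> (i + 1) mod 6" for i j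
  proof -
    from cv have "(\<forall>i<6. \<forall>j<6. j \<noteq> i \<and> j \<noteq> (i+1) mod 6 \<longrightarrow> cross3 (P i) (P ((i+1) mod 6)) (P j) > 0) \<or>
     (\<forall>i<6. \<forall>j<6. j \<noteq> i \<and> j \<noteq> (i+1) mod 6 \<longrightarrow> cross3 (P i) (P ((i+1) mod 6)) (P j) < 0)"
      unfolding convex_hexagon_def .
    then show ?thesis
    proof
      assume A: "\<forall>i<6. \<forall>j<6. j \<noteq> i \<and> j \<noteq> (i+1) mod 6 \<longrightarrow> cross3 (P i) (P ((i+1) mod 6)) (P j) > 0"
      have "K > 0" using A[rule_format, of 5 1] by (simp add: K_def)
      moreover have "cross3 (P i) (P ((i + 1) mod 6)) (P j) > 0" using A ij by blast
      ultimately show ?thesis by simp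
    next
      assume A: "\<forall>i<6. \<forall>j<6. j \<noteq> i \<and> j \<noteq> (i+1) mod 6 \<longrightarrow> cross3 (P i) (P ((i+1) mod 6)) (P j) < 0"
      have "K < 0" using A[rule_format, of 5 1] by (simp add: K_def)
      moreover have "cross3 (P i) (P ((i + 1) mod 6)) (P j) < 0" using A ij by blast
      ultimately show ?thesis by (simp add: mult_neg_neg)
    qed
  qed
  have idx:"(0 + 1) mod 6 = (1::nat)" "(0 + 3) mod 6 = (3::nat)" "(0 + 4) mod 6 = (4::nat)"
    "(1 + 1) mod 6 = (2::nat)" "(1 + 3) mod 6 = (4::nat)" "(1 + 4) mod 6 = (5::nat)"
    "(2 + 1) mod 6 = (3::nat)" "(2 + 3) mod 6 = (5::nat)" "(2 + 4) mod 6 = (0::nat)"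
    "(3 + 1) mod 6 = (4::nat)" "(3 + 3) mod 6 = (0::nat)" "(3 + 4) mod 6 = (1::nat)"
    "(4 + 1) mod 6 = (5::nat)" "(4 + 3) mod 6 = (1::nat)" "(4 + 4) mod 6 = (2::nat)"
    "(5 + 1) mod 6 = (0::nat)" "(5 + 3) mod 6 = (2::nat)" "(5 + 4) mod 6 = (3::nat)"
    by simp_all
  have sv0: "cross3 (P 5) (P 0) (P 1) * K > 0" using sg[of 5 1] unfolding idx by simp
  have sn0: "cross3 (P 5) (P 0) (P 2) * K > 0" using sg[of 5 2] unfolding idx by simp
  have sv1: "cross3 (P 0) (P 1) (P 2) * K > 0" using sg[of 0 2] unfolding idx by simp
  have sn1: "cross3 (P 0) (P 1) (P 3) * K > 0" using sg[of 0 3] unfolding idx by simp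
  have sv2: "cross3 (P 1) (P 2) (P 3) * K > 0" using sg[of 1 3] unfolding idx by simp
  have sn2: "cross3 (P 1) (P 2) (P 4) * K > 0" using sg[of 1 4] unfolding idx by simp
  have sv3: "cross3 (P 2) (P 3) (P 4) * K > 0" using sg[of 2 4] unfolding idx by simp
  have sn3: "cross3 (P 2) (P 3) (P 5) * K > 0" using sg[of 2 5] unfolding idx by simp
  have sv4: "cross3 (P 3) (P 4) (P 5) * K > 0" using sg[of 3 5] unfolding idx by simp
  have sn4: "cross3 (P 3) (P 4) (P 0) * K > 0" using sg[of 3 0] unfolding idx by simp
  have sv5: "cross3 (P 4) (P 5) (P 0) * K > 0" using sg[of 4 0] unfolding idx by simp
  have sn5: "cross3 (P 4) (P 5) (P 1) * K > 0" using sg[of 4 1] unfolding idx by simp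
  have Kn: "K \<noteq> 0" using sv0 by (auto simp: K_def)
  have "vertex_tri_area P 1 = vertex_tri_area P 0" using eqv[rule_format, of 1] by simp
  then have "\<bar>cross3 (P 0) (P 1) (P 2)\<bar> = \<bar>K\<bar>" unfolding vt_idx tri_area_def K_def by simp
  then have cv1: "cross3 (P 0) (P 1) (P 2) = K" using sv1 sgn_eq by blast
  have "vertex_tri_area P 2 = vertex_tri_area P 0" using eqv[rule_format, of 2] by simp
  then have "\<bar>cross3 (P 1) (P 2) (P 3)\<bar> = \<bar>K\<bar>" unfolding vt_idx tri_area_def K_def by simp
  then have cv2: "cross3 (P 1) (P 2) (P 3) = K" using sv2 sgn_eq by blast
  have "vertex_tri_area P 3 = vertex_tri_area P 0" using eqv[rule_format, of 3] by simp
  then have "\<bar>cross3 (P 2) (P 3) (P 4)\<bar> = \<bar>K\<bar>" unfolding vt_idx tri_area_def K_def by simp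
  then have cv3: "cross3 (P 2) (P 3) (P 4) = K" using sv3 sgn_eq by blast
  have "vertex_tri_area P 4 = vertex_tri_area P 0" using eqv[rule_format, of 4] by simp
  then have "\<bar>cross3 (P 3) (P 4) (P 5)\<bar> = \<bar>K\<bar>" unfolding vt_idx tri_area_def K_def by simp
  then have cv4: "cross3 (P 3) (P 4) (P 5) = K" using sv4 sgn_eq by blast
  have "vertex_tri_area P 5 = vertex_tri_area P 0" using eqv[rule_format, of 5] by simp
  then have "\<bar>cross3 (P 4) (P 5) (P 0)\<bar> = \<bar>K\<bar>" unfolding vt_idx tri_area_def K_def by simp
  then have cv5: "cross3 (P 4) (P 5) (P 0) = K" using sv5 sgn_eq by blast
  have cv0: "cross3 (P 5) (P 0) (P 1) = K" by (simp add: K_def)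
  define e0 where "e0 = P 1 - P 0"
  define e1 where "e1 = P 2 - P 1"
  define e2 where "e2 = P 3 - P 2"
  define e3 where "e3 = P 4 - P 3"
  define e4 where "e4 = P 5 - P 4"
  define e5 where "e5 = P 0 - P 5"
  define L0 where "L0 = xc e5 e1"
  define L1 where "L1 = xc e0 e2"
  define L2 where "L2 = xc e1 e3"
  define L3 where "L3 = xc e2 e4"
  define L4 where "L4 = xc e3 e5"
  define L5 where "L5 = xc e4 e0"
  have V0: "xc e5 e0 = K" using cv0 by (simp add: cross3_xc2 e5_def e0_def)
  have V1: "xc e0 e1 = K" using cv1 by (simp add: cross3_xc2 e0_def e1_def)
  have V2: "xc e1 e2 = K" using cv2 by (simp add: cross3_xc2 e1_def e2_def)
  have V3: "xc e2 e3 = K" using cv3 by (simp add: cross3_xc2 e2_def e3_def)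
  have V4: "xc e3 e4 = K" using cv4 by (simp add: cross3_xc2 e3_def e4_def)
  have V5: "xc e4 e5 = K" using cv5 by (simp add: cross3_xc2 e4_def e5_def)
  have N0: "cross3 (P 5) (P 0) (P 2) = K + L0" using id_a[of "P 5" "P 0" "P 2" "P 1"] cv0 by (simp add: L0_def e5_def e1_def)
  have Nn0: "K + L0 \<noteq> 0" using N0 sn0 by auto
  have N1: "cross3 (P 0) (P 1) (P 3) = K + L1" using id_a[of "P 0" "P 1" "P 3" "P 2"] cv1 by (simp add: L1_def e0_def e2_def)
  have Nn1: "K + L1 \<noteq> 0" using N1 sn1 by auto
  have N2: "cross3 (P 1) (P 2) (P 4) = K + L2" using id_a[of "P 1" "P 2" "P 4" "P 3"] cv2 by (simp add: L2_def e1_def e3_def)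
  have Nn2: "K + L2 \<noteq> 0" using N2 sn2 by auto
  have N3: "cross3 (P 2) (P 3) (P 5) = K + L3" using id_a[of "P 2" "P 3" "P 5" "P 4"] cv3 by (simp add: L3_def e2_def e4_def)
  have Nn3: "K + L3 \<noteq> 0" using N3 sn3 by auto
  have N4: "cross3 (P 3) (P 4) (P 0) = K + L4" using id_a[of "P 3" "P 4" "P 0" "P 5"] cv4 by (simp add: L4_def e3_def e5_def)
  have Nn4: "K + L4 \<noteq> 0" using N4 sn4 by auto
  have N5: "cross3 (P 4) (P 5) (P 1) = K + L5" using id_a[of "P 4" "P 5" "P 1" "P 0"] cv5 by (simp add: L5_def e4_def e0_def)
  have Nn5: "K + L5 \<noteq> 0" using N5 sn5 by auto
  have sum: "e0 + e1 + e2 + e3 + e4 + e5 = 0" by (simp add: e0_def e1_def e2_def e3_def e4_def e5_def)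
  have "e0 + e1 + e2 + e3 + e4 + e5 = 0" using sum by (simp add: algebra_simps)
  from core[OF this Kn V0 V1 V2 V3 V4 V5 Nn5[unfolded L5_def]] have C0: "L0 * L1 = K\<^sup>2" by (simp add: L0_def L1_def)
  have "e1 + e2 + e3 + e4 + e5 + e0 = 0" using sum by (simp add: algebra_simps)
  from core[OF this Kn V1 V2 V3 V4 V5 V0 Nn0[unfolded L0_def]] have C1: "L1 * L2 = K\<^sup>2" by (simp add: L1_def L2_def)
  have "e2 + e3 + e4 + e5 + e0 + e1 = 0" using sum by (simp add: algebra_simps)
  from core[OF this Kn V2 V3 V4 V5 V0 V1 Nn1[unfolded L1_def]] have C2: "L2 * L3 = K\<^sup>2" by (simp add: L2_def L3_def)
  have "e3 + e4 + e5 + e0 + e1 + e2 = 0" using sum by (simp add: algebra_simps)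
  from core[OF this Kn V3 V4 V5 V0 V1 V2 Nn2[unfolded L2_def]] have C3: "L3 * L4 = K\<^sup>2" by (simp add: L3_def L4_def)
  have "e4 + e5 + e0 + e1 + e2 + e3 = 0" using sum by (simp add: algebra_simps)
  from core[OF this Kn V4 V5 V0 V1 V2 V3 Nn3[unfolded L3_def]] have C4: "L4 * L5 = K\<^sup>2" by (simp add: L4_def L5_def)
  have "e5 + e0 + e1 + e2 + e3 + e4 = 0" using sum by (simp add: algebra_simps)
  from core[OF this Kn V5 V0 V1 V2 V3 V4 Nn4[unfolded L4_def]] have C5: "L5 * L0 = K\<^sup>2" by (simp add: L5_def L0_def)
  have X03: "cross3 (P 0) (P ((0 + 1) mod 6)) (P ((0 + 3) mod 6)) = 2 * K \<Longrightarrow> L1 = K" unfolding idx using N1 by simp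
  have X04: "cross3 (P 0) (P ((0 + 1) mod 6)) (P ((0 + 4) mod 6)) = 2 * K \<Longrightarrow> L5 = K" unfolding idx using id_b[of "P 0" "P 1" "P 4" "P 5"] cv0 by (simp add: L5_def e4_def e0_def)
  have X13: "cross3 (P 1) (P ((1 + 1) mod 6)) (P ((1 + 3) mod 6)) = 2 * K \<Longrightarrow> L2 = K" unfolding idx using N2 by simp
  have X14: "cross3 (P 1) (P ((1 + 1) mod 6)) (P ((1 + 4) mod 6)) = 2 * K \<Longrightarrow> L0 = K" unfolding idx using id_b[of "P 1" "P 2" "P 5" "P 0"] cv1 by (simp add: L0_def e5_def e1_def)
  have X23: "cross3 (P 2) (P ((2 + 1) mod 6)) (P ((2 + 3) mod 6)) = 2 * K \<Longrightarrow> L3 = K" unfolding idx using N3 by simp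
  have X24: "cross3 (P 2) (P ((2 + 1) mod 6)) (P ((2 + 4) mod 6)) = 2 * K \<Longrightarrow> L1 = K" unfolding idx using id_b[of "P 2" "P 3" "P 0" "P 1"] cv2 by (simp add: L1_def e0_def e2_def)
  have X33: "cross3 (P 3) (P ((3 + 1) mod 6)) (P ((3 + 3) mod 6)) = 2 * K \<Longrightarrow> L4 = K" unfolding idx using N4 by simp
  have X34: "cross3 (P 3) (P ((3 + 1) mod 6)) (P ((3 + 4) mod 6)) = 2 * K \<Longrightarrow> L2 = K" unfolding idx using id_b[of "P 3" "P 4" "P 1" "P 2"] cv3 by (simp add: L2_def e1_def e3_def)
  have X43: "cross3 (P 4) (P ((4 + 1) mod 6)) (P ((4 + 3) mod 6)) = 2 * K \<Longrightarrow> L5 = K" unfolding idx using N5 by simp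
  have X44: "cross3 (P 4) (P ((4 + 1) mod 6)) (P ((4 + 4) mod 6)) = 2 * K \<Longrightarrow> L3 = K" unfolding idx using id_b[of "P 4" "P 5" "P 2" "P 3"] cv4 by (simp add: L3_def e2_def e4_def)
  have X53: "cross3 (P 5) (P ((5 + 1) mod 6)) (P ((5 + 3) mod 6)) = 2 * K \<Longrightarrow> L0 = K" unfolding idx using N0 by simp
  have X54: "cross3 (P 5) (P ((5 + 1) mod 6)) (P ((5 + 4) mod 6)) = 2 * K \<Longrightarrow> L4 = K" unfolding idx using id_b[of "P 5" "P 0" "P 3" "P 4"] cv5 by (simp add: L4_def e3_def e5_def)
  obtain i j where i: "i < 6" and j: "j \<in> {(i + 3) mod 6, (i + 4) mod 6}"
    and T: "tri_area (P i) (P ((i + 1) mod 6)) (P j) = 2 * vertex_tri_area P 0"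
    using ex by blast
  have ii: "i = 0 \<or> i = 1 \<or> i = 2 \<or> i = 3 \<or> i = 4 \<or> i = 5" using i by auto
  have jc: "j < 6 \<and> j \<noteq> i \<and> j \<noteq> (i + 1) mod 6" using ii j by auto
  have "cross3 (P i) (P ((i + 1) mod 6)) (P j) = 2 * K"
    using sgn_eq2[OF sg[OF i conjunct1[OF jc] conjunct1[OF conjunct2[OF jc]] conjunct2[OF conjunct2[OF jc]]]] T
    by (simp add: vt_idx tri_area_def K_def)
  then have XX: "cross3 (P i) (P ((i + 1) mod 6)) (P ((i + 3) mod 6)) = 2 * K \<or>
      cross3 (P i) (P ((i + 1) mod 6)) (P ((i + 4) mod 6)) = 2 * K" using j by auto
  have DL: "L0 = K \<or> L1 = K \<or> L2 = K \<or> L3 = K \<or> L4 = K \<or> L5 = K"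
    using ii
  proof (elim disjE)
    assume h: "i = 0"
    show ?thesis using XX X03 X04 unfolding h by blast
  next
    assume h: "i = 1"
    show ?thesis using XX X13 X14 unfolding h by blast
  next
    assume h: "i = 2"
    show ?thesis using XX X23 X24 unfolding h by blast
  next
    assume h: "i = 3"
    show ?thesis using XX X33 X34 unfolding h by blast
  next
    assume h: "i = 4"
    show ?thesis using XX X43 X44 unfolding h by blast
  next
    assume h: "i = 5"
    show ?thesis using XX X53 X54 unfolding h by blast
  qed
  have LL: "L1 = K \<and> L2 = K \<and> L3 = K" by (rule chain6[OF Kn C0 C1 C2 C3 C4 C5 DL])
  have r1: "e2 = e1 - e0" using rec_step[OF V1 V2 Kn] LL Kn by (simp add: L1_def)
  have r2: "e3 = e2 - e1" using rec_step[OF V2 V3 Kn] LL Kn by (simp add: L2_def)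
  have r3: "e4 = e3 - e2" using rec_step[OF V3 V4 Kn] LL Kn by (simp add: L3_def)
  define Oc where "Oc = P 0 + P 2 - P 1"
  define u0 where "u0 = P 1 - P 2"
  define u1 where "u1 = P 1 + P 1 - P 0 - P 2"
  have dd: "a - b = c \<Longrightarrow> a = b + c" for a b c :: point by (metis add.commute diff_add_cancel)
  have p0: "P 0 = Oc + u0" by (simp add: Oc_def u0_def)
  have p1: "P 1 = Oc + u1" by (simp add: Oc_def u1_def)
  have p2: "P 2 = Oc + u1 - u0" by (simp add: Oc_def u0_def u1_def algebra_simps)
  have "P 3 = P 2 + (e1 - e0)" using dd[OF r1[unfolded e2_def]] .
  then have p3: "P 3 = Oc - u0" by (simp add: Oc_def u0_def e0_def e1_def algebra_simps)
  have "P 4 = P 3 + (e2 - e1)" using dd[OF r2[unfolded e3_def]] .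
  then have p4: "P 4 = Oc - u1" by (simp add: p3 Oc_def u0_def u1_def e2_def e1_def algebra_simps)
  have "P 5 = P 4 + (e3 - e2)" using dd[OF r3[unfolded e4_def]] .
  then have p5: "P 5 = Oc + u0 - u1" by (simp add: p3 p4 e3_def e2_def Oc_def u0_def u1_def algebra_simps)
  have Ku: "xc u0 u1 = K" unfolding V1[symmetric]
    by (simp add: u0_def u1_def e0_def e1_def xc_def algebra_simps)
  define w where "w = (2 / sqrt 3) *\<^sub>R (u1 - (1/2) *\<^sub>R u0)"
  have hw: "(sqrt 3 / 2) *\<^sub>R w = u1 - (1/2) *\<^sub>R u0" by (simp add: w_def)
  have Dn: "xc u0 w \<noteq> 0"
  proof -
    have "xc u0 w = (2 / sqrt 3) * xc u0 u1" by (simp add: w_def xc_lin)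
    then show ?thesis using Ku Kn by simp
  qed
  define f where "f = (\<lambda>x::point. Oc + fst x *\<^sub>R u0 + snd x *\<^sub>R w)"
  define Q where "Q = (\<lambda>k::nat. (cos (real k * pi / 3), sin (real k * pi / 3)))"
  have af: "affine_map f" unfolding f_def by (rule lin_affine[OF Dn])
  have reg: "regular_hexagon Q" unfolding regular_hexagon_def
    by (rule exI[of _ "(0,0)"], rule exI[of _ 1], rule exI[of _ 0], rule exI[of _ 1]) (simp add: Q_def)
  have fq: "f (Q 0) = P 0" "f (Q 1) = P 1" "f (Q 2) = P 2" "f (Q 3) = P 3" "f (Q 4) = P 4" "f (Q 5) = P 5"
  proof -
    have Qv: "Q 0 = (1, 0)" "Q 1 = (1/2, sqrt 3 / 2)" "Q 2 = (-1/2, sqrt 3 / 2)" "Q 3 = (-1, 0)"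
      "Q 4 = (-1/2, - sqrt 3 / 2)" "Q 5 = (1/2, - sqrt 3 / 2)"
      unfolding Q_def by (rule Qtab(1), rule Qtab(2), rule Qtab(3), rule Qtab(4), rule Qtab(5), rule Qtab(6))
    show "f (Q 0) = P 0" unfolding f_def Qv p0 by simp
    have "f (Q 1) = Oc + (1/2) *\<^sub>R u0 + (sqrt 3 / 2) *\<^sub>R w" unfolding f_def Qv by (simp add: )
    then show "f (Q 1) = P 1" unfolding p1 by (simp add: hw)
    have "f (Q 2) = Oc + (-1/2) *\<^sub>R u0 + (sqrt 3 / 2) *\<^sub>R w" unfolding f_def Qv by (simp add: )
    then show "f (Q 2) = P 2" unfolding p2 by (simp add: hw prod_eq_iff)
    show "f (Q 3) = P 3" unfolding f_def Qv p3 by simp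
    have "f (Q 4) = Oc + (-1/2) *\<^sub>R u0 - (sqrt 3 / 2) *\<^sub>R w" unfolding f_def Qv by (simp add: )
    then show "f (Q 4) = P 4" unfolding p4 by (simp add: hw prod_eq_iff)
    have "f (Q 5) = Oc + (1/2) *\<^sub>R u0 - (sqrt 3 / 2) *\<^sub>R w" unfolding f_def Qv by (simp add: )
    then show "f (Q 5) = P 5" unfolding p5 by (simp add: hw prod_eq_iff)
  qed
  have "\<forall>k<6. P k = f (Q k)"
  proof (intro allI impI)
    fix k :: nat assume "k < 6"
    then have "k = 0 \<or> k = 1 \<or> k = 2 \<or> k = 3 \<or> k = 4 \<or> k = 5" by auto
    then show "P k = f (Q k)" using fq by auto
  qed
  then show ?thesis unfolding affine_regular_def using af reg by blast
qed


theorem proposition3: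
  fixes P :: hexagon
  assumes "convex_hexagon P"
  shows "affine_regular P \<longleftrightarrow>
           ((\<forall>i<6. vertex_tri_area P i = vertex_tri_area P 0) \<and>
            (\<exists>i<6. \<exists>j\<in>{(i + 3) mod 6, (i + 4) mod 6}.
               tri_area (P i) (P ((i + 1) mod 6)) (P j) = 2 * vertex_tri_area P 0))"
proof
  assume "affine_regular P"
  then show "(\<forall>i<6. vertex_tri_area P i = vertex_tri_area P 0) \<and>
            (\<exists>i<6. \<exists>j\<in>{(i + 3) mod 6, (i + 4) mod 6}.
               tri_area (P i) (P ((i + 1) mod 6)) (P j) = 2 * vertex_tri_area P 0)"
    by (rule dir1)
next
  assume h: "(\<forall>i<6. vertex_tri_area P i = vertex_tri_area P 0) \<and>
            (\<exists>i<6. \<exists>j\<in>{(i + 3) mod 6, (i + 4) mod 6}.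
               tri_area (P i) (P ((i + 1) mod 6)) (P j) = 2 * vertex_tri_area P 0)"
  show "affine_regular P" using dir2[OF assms conjunct1[OF h] conjunct2[OF h]] .
qed

end
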